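(* Let $\sigma>0$, $\lambda\ne0$, $T>0$, and let $\kappa(t,s)=\frac{\sigma^2}{\lambda^2+\sigma^2t}\mathbbm{1}_{s\le t}$ for $s,t\in[0,T]$ (this is $\lambda^{-2}\tilde K^{t,\lambda}(t,s)\mathbbm 1_{s\le t}$ for the constant covariance $K\equiv\sigma^2$). Define $H(t,s)=\sum_{n\ge0}\kappa^{(n+1)}(t,s)$, where $\kappa^{(1)}=\kappa$ and $\kappa^{(n+1)}(t,s)=\int_s^t\kappa(t,v)\kappa^{(n)}(v,s)\,dv$. Then \[ H(t,s)=\frac{\sigma^2}{\lambda^2+\sigma^2s}\mathbbm 1_{s\le t}. \] *)

theory Defs
  imports "HOL-Analysis.Analysis"
begin

definition kappa :: "real \<Rightarrow> real \<Rightarrow> real \<Rightarrow> real \<Rightarrow> real" where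
  "kappa sg lam t s = (if s \<le> t then sg\<^sup>2 / (lam\<^sup>2 + sg\<^sup>2 * t) else 0)"

text \<open>Iterated kernels: kappa_iter sg lam n = kappa^(n+1), i.e.
  kappa^(1) = kappa and kappa^(n+1)(t,s) = integral over [s,t] of kappa(t,v) kappa^(n)(v,s) dv.\<close>
fun kappa_iter :: "real \<Rightarrow> real \<Rightarrow> nat \<Rightarrow> real \<Rightarrow> real \<Rightarrow> real" where
  "kappa_iter sg lam 0 t s = kappa sg lam t s"
| "kappa_iter sg lam (Suc n) t s =
     integral {s..t} (\<lambda>v. kappa sg lam t v * kappa_iter sg lam n v s)"

end

theory Submission
  imports Defs
begin

lemma kappa_iter_closed:
  fixes sg lam s :: real
  assumes sg: "sg > 0" and lam: "lam \<noteq> 0" and s0: "s \<ge> 0"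
  shows "\<And>t. s \<le> t \<Longrightarrow> kappa_iter sg lam n t s =
     sg\<^sup>2 / (lam\<^sup>2 + sg\<^sup>2 * t) *
     ((ln (lam\<^sup>2 + sg\<^sup>2 * t) - ln (lam\<^sup>2 + sg\<^sup>2 * s)) ^ n / fact n)"
proof (induction n)
  case 0
  then show ?case by (simp add: kappa_def)
next
  case (Suc n)
  fix t assume st: "s \<le> t"
  define D where "D x = lam\<^sup>2 + sg\<^sup>2 * x" for x
  have Dpos: "D x > 0" if "x \<ge> 0" for x
    using that lam sg unfolding D_def
    by (simp add: add_pos_nonneg)
  define L where "L x = ln (D x) - ln (D s)" for x
  define F where "F x = L x ^ Suc n / fact (Suc n)" for x
  have eq: "kappa sg lam t v * kappa_iter sg lam n v s =
      sg\<^sup>2 / D t * (sg\<^sup>2 / D v * (L v ^ n / fact n))" if "v \<in> {s..t}" for v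
    using that Suc.IH[of v] unfolding kappa_def D_def L_def by auto
  have der: "(F has_real_derivative (sg\<^sup>2 / D v * (L v ^ n / fact n))) (at v within {s..t})"
    if "v \<in> {s..t}" for v
  proof -
    have dv: "D v > 0" using that s0 Dpos by auto
    have "(D has_real_derivative sg\<^sup>2) (at v within {s..t})"
      unfolding D_def[abs_def] by (auto intro!: derivative_eq_intros)
    then have "((\<lambda>x. ln (D x)) has_real_derivative (inverse (D v) * sg\<^sup>2)) (at v within {s..t})"
      using dv by (auto intro!: derivative_eq_intros simp: divide_inverse mult.commute)
    then have "(L has_real_derivative (inverse (D v) * sg\<^sup>2)) (at v within {s..t})"
      unfolding L_def[abs_def] using DERIV_diff[OF _ DERIV_const, of "\<lambda>x. ln (D x)"] by fastforce
    then have "(F has_real_derivative ((1 + of_nat n) * ((inverse (D v) * sg\<^sup>2) * L v ^ n) / fact (Suc n))) (at v within {s..t})"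
      unfolding F_def[abs_def] by (intro DERIV_cdivide DERIV_power_Suc)
    moreover have "(1 + of_nat n) * ((inverse (D v) * sg\<^sup>2) * L v ^ n) / fact (Suc n)
        = sg\<^sup>2 / D v * (L v ^ n / fact n)"
    proof -
      have f: "fact (Suc n) = (1 + of_nat n) * (fact n :: real)" by (simp add: fact_Suc)
      have "(1 + of_nat n :: real) > 0" by simp
      then show ?thesis unfolding f using dv by (simp add: divide_inverse)
    qed
    ultimately show ?thesis by simp
  qed
  have "((\<lambda>v. sg\<^sup>2 / D v * (L v ^ n / fact n)) has_integral (F t - F s)) {s..t}"
    using st der by (intro fundamental_theorem_of_calculus) (auto simp: has_real_derivative_iff_has_vector_derivative[symmetric])
  then have "integral {s..t} (\<lambda>v. sg\<^sup>2 / D v * (L v ^ n / fact n)) = F t"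
    by (simp add: integral_unique F_def L_def)
  then have "integral {s..t} (\<lambda>v. kappa sg lam t v * kappa_iter sg lam n v s) = sg\<^sup>2 / D t * F t"
  proof -
    assume h: "integral {s..t} (\<lambda>v. sg\<^sup>2 / D v * (L v ^ n / fact n)) = F t"
    have "integral {s..t} (\<lambda>v. kappa sg lam t v * kappa_iter sg lam n v s)
       = integral {s..t} (\<lambda>v. sg\<^sup>2 / D t * (sg\<^sup>2 / D v * (L v ^ n / fact n)))"
      by (rule integral_cong[OF eq])
    also have "\<dots> = sg\<^sup>2 / D t * F t" by (simp only: integral_mult_right h)
    finally show ?thesis .
  qed
  then show "kappa_iter sg lam (Suc n) t s = sg\<^sup>2 / (lam\<^sup>2 + sg\<^sup>2 * t) *
     ((ln (lam\<^sup>2 + sg\<^sup>2 * t) - ln (lam\<^sup>2 + sg\<^sup>2 * s)) ^ Suc n / fact (Suc n))"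
    by (simp add: F_def L_def D_def)
qed

lemma kappa_iter_zero:
  assumes "t < s" shows "kappa_iter sg lam n t s = 0"
  using assms by (cases n) (auto simp: kappa_def)

theorem lemma5p2:
  fixes sg lam T s t :: real
  assumes "sg > 0" and "lam \<noteq> 0" and "T > 0"
    and "s \<in> {0..T}" and "t \<in> {0..T}"
  shows "(\<lambda>n. kappa_iter sg lam n t s) sums
           (if s \<le> t then sg\<^sup>2 / (lam\<^sup>2 + sg\<^sup>2 * s) else 0)"
proof (cases "s \<le> t")
  case False
  then show ?thesis using kappa_iter_zero[of t s] by simp
next
  case True
  define D where "D x = lam\<^sup>2 + sg\<^sup>2 * x" for x
  have Dpos: "D x > 0" if "x \<ge> 0" for x
    using that assms unfolding D_def
    by (simp add: add_pos_nonneg)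
  define L where "L = ln (D t) - ln (D s)"
  have ds: "D s > 0" and dt: "D t > 0" using Dpos assms by auto
  have "(\<lambda>n. L ^ n /\<^sub>R fact n) sums exp L" by (rule exp_converges)
  then have "(\<lambda>n. sg\<^sup>2 / D t * (L ^ n / fact n)) sums (sg\<^sup>2 / D t * exp L)"
    by (intro sums_mult) (simp add: divide_inverse mult.commute)
  moreover have "exp L = D t / D s" using ds dt by (simp add: L_def exp_diff)
  moreover have "sg\<^sup>2 / D t * (D t / D s) = sg\<^sup>2 / D s" using dt by simp
  moreover have "kappa_iter sg lam n t s = sg\<^sup>2 / D t * (L ^ n / fact n)" for n
    using kappa_iter_closed[OF assms(1,2), of s t n] assms True by (simp add: D_def L_def)
  moreover have "D t \<noteq> 0" using dt by simp
  ultimately show ?thesis using True by (simp add: D_def del: divide_const_simps)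
qed

end
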